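(* Let $\Omega$ be a topological space and $X$ a Hausdorff locally convex topological vector space over $\mathbb{C}$. Let $A \subset C(\Omega, \mathbb{C})$, $f \in F(\Omega, X)$, $v \in F(\Omega, \mathbb{R}_+)$. Suppose that $\overline{(vf)(\Omega)}$ is compact and $vf$ is continuous on $\mathrm{supp}\, v$ (respectively, $\overline{f(\mathrm{supp}\, v)}$ is compact and $f$ is continuous on $\mathrm{supp}\, v$). If $A$ $\beta$-separates disjoint Lebesgue sets of $vf$ (respectively, of $f$) in $\mathrm{supp}\, v$, then for any $(A, v)$-antisymmetric $z$-filter $\mathcal{F}$ on $\Omega$, the set $\bigcap_{F \in \mathcal{F}} \overline{(vf)(F \cap \mathrm{supp}\, v)}$ (respectively, $\bigcap_{F \in \mathcal{F}} \overline{f(F \cap \mathrm{supp}\, v)}$) consists of a single point.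
   Context: Topological spaces are not assumed Hausdorff. $vf(x)=v(x)f(x)$; $\mathrm{supp}\,v$ is the closure of $\{v\neq0\}$. $X^*$ is the space of continuous linear functionals $X\to\mathbb{C}$, $\Re$ the real part. A zero-set is $h^{-1}(0)$ with $h\in C(\Omega,\mathbb{R})$; a $z$-filter is a nonempty family $\mathcal{F}$ of zero-sets with $\emptyset\notin\mathcal{F}$, closed under finite intersections and under passing to larger zero-sets. $\mathcal{F}$ is $(A,v)$-antisymmetric if every $F\in\mathcal{F}$ meets $\mathrm{supp}\,v$ and, for each $\phi\in A$ with $\bigcap_{F\in\mathcal{F}}\overline{\phi(F\cap\mathrm{supp}\,v)}\subset[0,1]$ (closures in $\mathbb{C}\cup\{\infty\}$), this intersection is a single point. For $h\in F(\Omega,X)$, $A$ "$\beta$-separates disjoint Lebesgue sets of $h$ in $\mathrm{supp}\,v$" means: for any $(A,v)$-antisymmetric $z$-filter $\mathcal{F}$, any $e^*\in X^*$ and $a<b$ real, there is $F\in\mathcal{F}$ with $F\cap L_a=\emptyset$ or $F\cap L^b=\emptyset$, where $L_a=\{x\in\mathrm{supp}\,v:\Re e^*(h(x))\le a\}$, $L^b=\{x\in\mathrm{supp}\,v:\Re e^*(h(x))\ge b\}$. *)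

theory Defs
  imports "HOL-Analysis.Analysis"
begin

text \<open>The space X: a type 'x carrying a (Hausdorff, by the class t2_space) topology and
an additive group structure, together with a complex scalar multiplication smul.\<close>

definition complex_vs :: "(complex \<Rightarrow> 'x::ab_group_add \<Rightarrow> 'x) \<Rightarrow> bool" where
  "complex_vs smul \<longleftrightarrow>
     (\<forall>a x y. smul a (x + y) = smul a x + smul a y) \<and>
     (\<forall>a b x. smul (a + b) x = smul a x + smul b x) \<and>
     (\<forall>a b x. smul a (smul b x) = smul (a * b) x) \<and>
     (\<forall>x. smul 1 x = x)"

definition convex_wrt :: "(complex \<Rightarrow> 'x::ab_group_add \<Rightarrow> 'x) \<Rightarrow> 'x set \<Rightarrow> bool" where
  "convex_wrt smul C \<longleftrightarrow>
     (\<forall>x\<in>C. \<forall>y\<in>C. \<forall>t::real. 0 \<le> t \<and> t \<le> 1 \<longrightarrow>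
        smul (complex_of_real t) x + smul (complex_of_real (1 - t)) y \<in> C)"

text \<open>Hausdorff locally convex topological vector space over the complex numbers.\<close>
definition hausdorff_lctvs :: "(complex \<Rightarrow> 'x::{t2_space,ab_group_add} \<Rightarrow> 'x) \<Rightarrow> bool" where
  "hausdorff_lctvs smul \<longleftrightarrow>
     complex_vs smul \<and>
     continuous_on UNIV (\<lambda>p::'x \<times> 'x. fst p + snd p) \<and>
     continuous_on UNIV (\<lambda>p::complex \<times> 'x. smul (fst p) (snd p)) \<and>
     (\<forall>U. open U \<and> (0::'x) \<in> U \<longrightarrow>
        (\<exists>C. open C \<and> 0 \<in> C \<and> C \<subseteq> U \<and> convex_wrt smul C))"

text \<open>X^*: continuous linear functionals X \<rightarrow> C.\<close>
definition dual_space :: "(complex \<Rightarrow> 'x::{topological_space,ab_group_add} \<Rightarrow> 'x) \<Rightarrow> ('x \<Rightarrow> complex) set" where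
  "dual_space smul = {e. (\<forall>x y. e (x + y) = e x + e y) \<and> (\<forall>c x. e (smul c x) = c * e x)
                          \<and> continuous_on UNIV e}"

text \<open>supp v = closure of {v \<noteq> 0} in \<Omega>.\<close>
definition supp :: "'a topology \<Rightarrow> ('a \<Rightarrow> real) \<Rightarrow> 'a set" where
  "supp T v = T closure_of {x \<in> topspace T. v x \<noteq> 0}"

text \<open>The extended complex plane C \<union> {\<infinity>} (one-point compactification); None is \<infinity>.\<close>
definition ext_plane :: "complex option topology" where
  "ext_plane = topology (\<lambda>U. if None \<in> U then compact (- (Some -` U)) else open (Some -` U))"

definition zero_set :: "'a topology \<Rightarrow> 'a set \<Rightarrow> bool" where
  "zero_set T Z \<longleftrightarrow> (\<exists>h. continuous_map T euclideanreal h \<and> Z = {x \<in> topspace T. h x = 0})"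

definition z_filter :: "'a topology \<Rightarrow> 'a set set \<Rightarrow> bool" where
  "z_filter T \<F> \<longleftrightarrow> \<F> \<noteq> {} \<and> (\<forall>F\<in>\<F>. zero_set T F) \<and> {} \<notin> \<F> \<and>
     (\<forall>F\<in>\<F>. \<forall>G\<in>\<F>. F \<inter> G \<in> \<F>) \<and>
     (\<forall>F\<in>\<F>. \<forall>Z. zero_set T Z \<and> F \<subseteq> Z \<longrightarrow> Z \<in> \<F>)"

definition antisymmetric_zf :: "'a topology \<Rightarrow> ('a \<Rightarrow> complex) set \<Rightarrow> ('a \<Rightarrow> real) \<Rightarrow> 'a set set \<Rightarrow> bool" where
  "antisymmetric_zf T A v \<F> \<longleftrightarrow> z_filter T \<F> \<and>
     (\<forall>F\<in>\<F>. F \<inter> supp T v \<noteq> {}) \<and>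
     (\<forall>\<phi>\<in>A. (\<Inter>F\<in>\<F>. ext_plane closure_of (Some ` \<phi> ` (F \<inter> supp T v)))
                 \<subseteq> Some ` complex_of_real ` {0..1}
             \<longrightarrow> (\<exists>p. (\<Inter>F\<in>\<F>. ext_plane closure_of (Some ` \<phi> ` (F \<inter> supp T v))) = {p}))"

definition beta_separates ::
  "'a topology \<Rightarrow> ('a \<Rightarrow> complex) set \<Rightarrow> ('a \<Rightarrow> real) \<Rightarrow>
   (complex \<Rightarrow> 'x::{topological_space,ab_group_add} \<Rightarrow> 'x) \<Rightarrow> ('a \<Rightarrow> 'x) \<Rightarrow> bool" where
  "beta_separates T A v smul h \<longleftrightarrow>
     (\<forall>\<F> e a b. antisymmetric_zf T A v \<F> \<and> e \<in> dual_space smul \<and> a < b \<longrightarrow>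
        (\<exists>F\<in>\<F>. F \<inter> {x \<in> supp T v. Re (e (h x)) \<le> a} = {}
               \<or> F \<inter> {x \<in> supp T v. Re (e (h x)) \<ge> b} = {}))"

end

theory Submission
  imports Defs
begin


locale rvs =
  fixes rs :: "real \<Rightarrow> 'x::ab_group_add \<Rightarrow> 'x"
  assumes radd: "rs a (x + y) = rs a x + rs a y"
    and raddl: "rs (a + b) x = rs a x + rs b x"
    and rassoc: "rs a (rs b x) = rs (a * b) x"
    and rone: "rs 1 x = x"
begin

lemma rzero[simp]: "rs 0 x = 0"
  using raddl[of 0 0 x] by simp

lemma rzero2[simp]: "rs a 0 = 0"
  using radd[of a 0 0] by simp

lemma rneg: "rs (-a) x = - rs a x"
  using raddl[of a "-a" x] by (simp add: eq_neg_iff_add_eq_0 add.commute)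

lemma rneg2: "rs a (-x) = - rs a x"
  using radd[of a x "-x"] by (simp add: eq_neg_iff_add_eq_0 add.commute)

definition sublin :: "('x \<Rightarrow> real) \<Rightarrow> bool" where
  "sublin q \<longleftrightarrow> (\<forall>x y. q (x + y) \<le> q x + q y) \<and> (\<forall>r>0. \<forall>x. q (rs r x) = r * q x)"

lemma sublinI:
  assumes "\<And>x y. q (x + y) \<le> q x + q y" "\<And>r x. r > 0 \<Longrightarrow> q (rs r x) \<le> r * q x"
  shows "sublin q"
proof -
  have "q (rs r x) = r * q x" if "r > 0" for r x
  proof -
    have "q x = q (rs (1/r) (rs r x))" using that by (simp add: rassoc rone)
    also have "\<dots> \<le> (1/r) * q (rs r x)" using assms(2)[of "1/r" "rs r x"] that by simp
    finally have "r * q x \<le> q (rs r x)" using that by (simp add: field_simps)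
    then show ?thesis using assms(2)[OF that, of x] by linarith
  qed
  then show ?thesis using assms(1) unfolding sublin_def by blast
qed

lemma sublin_add: "sublin q \<Longrightarrow> q (x + y) \<le> q x + q y"
  unfolding sublin_def by blast

lemma sublin_0: "sublin q \<Longrightarrow> q 0 = 0"
proof -
  assume "sublin q"
  then have "q (rs 2 0) = 2 * q 0" unfolding sublin_def by (metis zero_less_numeral)
  then show "q 0 = 0" by simp
qed

lemma sublin_hom: "sublin q \<Longrightarrow> t \<ge> 0 \<Longrightarrow> q (rs t y) = t * q y"
  by (cases "t = 0") (auto simp: sublin_0 sublin_def)

lemma sublin_lb: "sublin q \<Longrightarrow> - q (- x) \<le> q x"
  using sublin_add[of q x "-x"] sublin_0[of q] by simp

definition sh :: "('x \<Rightarrow> real) \<Rightarrow> 'x \<Rightarrow> 'x \<Rightarrow> real" where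
  "sh q y x = Inf ((\<lambda>t. q (x + rs t y) - t * q y) ` {0..})"

lemma sh_lb_pt: "sublin q \<Longrightarrow> t \<ge> 0 \<Longrightarrow> - q (- x) \<le> q (x + rs t y) - t * q y"
  using sublin_add[of q "x + rs t y" "-x"] sublin_hom[of q t y] by (simp add: add.commute)

lemma sh_bdd: "sublin q \<Longrightarrow> bdd_below ((\<lambda>t. q (x + rs t y) - t * q y) ` {0..})"
  unfolding bdd_below_def using sh_lb_pt by blast

lemma sh_le_pt: "sublin q \<Longrightarrow> t \<ge> 0 \<Longrightarrow> sh q y x \<le> q (x + rs t y) - t * q y"
  unfolding sh_def by (rule cInf_lower) (auto intro: sh_bdd)

lemma sh_le: "sublin q \<Longrightarrow> sh q y x \<le> q x"
  using sh_le_pt[of q 0 y x] by simp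

lemma sh_geI: "(\<And>t. t \<ge> 0 \<Longrightarrow> c \<le> q (x + rs t y) - t * q y) \<Longrightarrow> c \<le> sh q y x"
  unfolding sh_def by (rule cInf_greatest) auto

lemma sh_lb: "sublin q \<Longrightarrow> - q (- x) \<le> sh q y x"
  by (rule sh_geI) (rule sh_lb_pt)

lemma sh_sublin:
  assumes q: "sublin q" shows "sublin (sh q y)"
proof (rule sublinI)
  fix x1 x2
  have "sh q y (x1 + x2) - (q (x2 + rs t2 y) - t2 * q y) \<le> sh q y x1" if t2: "t2 \<ge> 0" for t2
  proof (rule sh_geI)
    fix t1 :: real assume t1: "t1 \<ge> 0"
    have "sh q y (x1 + x2) \<le> q (x1 + x2 + rs (t1 + t2) y) - (t1 + t2) * q y"
      using sh_le_pt[OF q] t1 t2 by simp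
    also have "x1 + x2 + rs (t1 + t2) y = (x1 + rs t1 y) + (x2 + rs t2 y)"
      by (simp add: raddl algebra_simps)
    also have "q \<dots> \<le> q (x1 + rs t1 y) + q (x2 + rs t2 y)" by (rule sublin_add[OF q])
    finally show "sh q y (x1 + x2) - (q (x2 + rs t2 y) - t2 * q y) \<le> q (x1 + rs t1 y) - t1 * q y"
      by (simp add: algebra_simps)
  qed
  then have "sh q y (x1 + x2) - sh q y x1 \<le> sh q y x2"
    by (intro sh_geI) (simp add: algebra_simps)
  then show "sh q y (x1 + x2) \<le> sh q y x1 + sh q y x2" by simp
next
  fix r :: real and x assume r: "r > 0"
  have "sh q y (rs r x) / r \<le> sh q y x"
  proof (rule sh_geI)
    fix t :: real assume t: "t \<ge> 0"
    have "sh q y (rs r x) \<le> q (rs r x + rs (r * t) y) - (r * t) * q y"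
      using sh_le_pt[OF q] t r by simp
    also have "rs r x + rs (r * t) y = rs r (x + rs t y)" by (simp add: radd rassoc)
    also have "q \<dots> = r * q (x + rs t y)" using sublin_hom[OF q] r by simp
    finally show "sh q y (rs r x) / r \<le> q (x + rs t y) - t * q y"
      using r by (simp add: field_simps)
  qed
  then show "sh q y (rs r x) \<le> r * sh q y x" using r by (simp add: field_simps)
qed

lemma chain_inf_sublin:
  assumes C: "C \<noteq> {}" "\<And>q. q \<in> C \<Longrightarrow> sublin q \<and> (\<forall>x. q x \<le> P x)"
    and ch: "\<And>a b. a \<in> C \<Longrightarrow> b \<in> C \<Longrightarrow> (\<forall>x. a x \<le> b x) \<or> (\<forall>x. b x \<le> a x)"
  defines "u \<equiv> \<lambda>x. Inf ((\<lambda>q. q x) ` C)"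
  shows "sublin u" "\<And>x. u x \<le> P x" "\<And>q x. q \<in> C \<Longrightarrow> u x \<le> q x"
proof -
  have lbC: "- P (- x) \<le> q x" if "q \<in> C" for q x
  proof -
    from C(2)[OF that] have "sublin q" "q (-x) \<le> P (-x)" by auto
    with sublin_lb[of q x] show ?thesis by linarith
  qed
  have bdd: "bdd_below ((\<lambda>q. q x) ` C)" for x
    by (rule bdd_belowI2) (rule lbC)
  show low: "u x \<le> q x" if "q \<in> C" for q x
    unfolding u_def by (rule cInf_lower) (use that bdd in auto)
  have geI: "c \<le> u x" if "\<And>q. q \<in> C \<Longrightarrow> c \<le> q x" for c x
    unfolding u_def by (rule cInf_greatest) (use that C(1) in auto)
  show "u x \<le> P x" for x
    using C low by (meson equals0I order.trans)
  show "sublin u"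
  proof (rule sublinI)
    fix x y
    have "u (x + y) \<le> q1 x + q2 y" if "q1 \<in> C" "q2 \<in> C" for q1 q2
    proof (cases "\<forall>x. q1 x \<le> q2 x")
      case True
      have "u (x + y) \<le> q1 (x + y)" using low that by blast
      also have "\<dots> \<le> q1 x + q1 y" using C(2) that sublin_add by blast
      finally show ?thesis using True[rule_format, of y] by linarith
    next
      case False
      then have F: "\<forall>x. q2 x \<le> q1 x" using ch that by blast
      have "u (x + y) \<le> q2 (x + y)" using low that by blast
      also have "\<dots> \<le> q2 x + q2 y" using C(2) that sublin_add by blast
      finally show ?thesis using F[rule_format, of x] by linarith
    qed
    then have "u (x + y) - q2 y \<le> u x" if "q2 \<in> C" for q2
      using that by (intro geI) (simp add: algebra_simps)
    then have "u (x + y) - u x \<le> u y"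
      by (intro geI) (simp add: algebra_simps)
    then show "u (x + y) \<le> u x + u y" by simp
  next
    fix r :: real and x assume r: "r > 0"
    have "u (rs r x) / r \<le> u x"
    proof (rule geI)
      fix q assume q: "q \<in> C"
      have "u (rs r x) \<le> q (rs r x)" using low q by blast
      also have "\<dots> = r * q x" using C(2)[OF q] r unfolding sublin_def by blast
      finally show "u (rs r x) / r \<le> q x" using r by (simp add: field_simps)
    qed
    then show "u (rs r x) \<le> r * u x" using r by (simp add: field_simps)
  qed
qed

lemma minimal_exists:
  assumes P: "sublin P"
  shows "\<exists>m. sublin m \<and> (\<forall>x. m x \<le> P x) \<and>
     (\<forall>a. sublin a \<and> (\<forall>x. a x \<le> P x) \<and> (\<forall>x. a x \<le> m x) \<longrightarrow> a = m)"
proof -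
  define S where "S = {q. sublin q \<and> (\<forall>x. q x \<le> P x)}"
  define R where "R = (\<lambda>a b::'x \<Rightarrow> real. \<forall>x. b x \<le> a x)"
  have po: "partial_order_on S (relation_of R S)"
  proof -
    have 1: "relation_of R S \<subseteq> S \<times> S" unfolding relation_of_def by auto
    have 2: "refl_on S (relation_of R S)" unfolding refl_on_def relation_of_def R_def by auto
    have 3: "trans (relation_of R S)" unfolding trans_on_def relation_of_def R_def
      by (auto intro: order.trans)
    have 4: "antisym (relation_of R S)" unfolding antisym_on_def relation_of_def R_def
      by (auto simp: fun_eq_iff intro: order.antisym)
    show ?thesis unfolding partial_order_on_def preorder_on_def using 1 2 3 4 by blast
  qed
  have "\<exists>u \<in> S. \<forall>a \<in> C. R a u" if C: "C \<in> Chains (relation_of R S)" for C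
  proof (cases "C = {}")
    case True
    then show ?thesis using P unfolding S_def by auto
  next
    case False
    have CS: "C \<subseteq> S" using C unfolding Chains_def relation_of_def by auto
    have ch: "(\<forall>x. a x \<le> b x) \<or> (\<forall>x. b x \<le> a x)" if "a \<in> C" "b \<in> C" for a b
      using C that unfolding Chains_def relation_of_def R_def by auto
    have CS': "sublin q \<and> (\<forall>x. q x \<le> P x)" if "q \<in> C" for q
      using CS that unfolding S_def by blast
    note ci = chain_inf_sublin[of C P, OF False CS' ch]
    show ?thesis
    proof (rule bexI[of _ "\<lambda>x. Inf ((\<lambda>q. q x) ` C)"])
      show "(\<lambda>x. Inf ((\<lambda>q. q x) ` C)) \<in> S" unfolding S_def using ci(1,2) by blast
      show "\<forall>a\<in>C. R a (\<lambda>x. Inf ((\<lambda>q. q x) ` C))" unfolding R_def using ci(3) by blast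
    qed
  qed
  from predicate_Zorn[OF po this] obtain m where "m \<in> S" "\<forall>a\<in>S. R m a \<longrightarrow> a = m" by blast
  then show ?thesis unfolding S_def R_def by auto
qed

lemma hahn_banach:
  assumes P: "sublin P"
  shows "\<exists>l. (\<forall>x y. l (x + y) = l x + l y) \<and> (\<forall>r x. l (rs r x) = r * l x) \<and>
     (\<forall>x. l x \<le> P x) \<and> P z \<le> l z"
proof -
  define P' where "P' = sh P z"
  have P': "sublin P'" unfolding P'_def by (rule sh_sublin[OF P])
  obtain m where m: "sublin m" "\<And>x. m x \<le> P' x"
    and mmin: "\<And>a. sublin a \<Longrightarrow> (\<forall>x. a x \<le> P' x) \<Longrightarrow> (\<forall>x. a x \<le> m x) \<Longrightarrow> a = m"
    using minimal_exists[OF P'] by blast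
  have shm: "sh m y = m" for y
    using mmin[of "sh m y"] sh_sublin[OF m(1)] sh_le[OF m(1)] m(2) by (meson order.trans)
  have sup: "m x + m y \<le> m (x + y)" for x y
    using sh_le_pt[OF m(1), of 1 y x] shm[of y] by (simp add: rone)
  have add: "m (x + y) = m x + m y" for x y
    using sup[of x y] sublin_add[OF m(1), of x y] by simp
  have neg: "m (- y) = - m y" for y
    using add[of y "-y"] sublin_0[OF m(1)] by simp
  have hom: "m (rs r x) = r * m x" for r x
  proof (cases "r \<ge> 0")
    case True then show ?thesis using sublin_hom[OF m(1)] by blast
  next
    case False
    have "rs r x = - rs (-r) x" using rneg[of "-r" x] by simp
    then show ?thesis using neg sublin_hom[OF m(1), of "-r" x] False by simp
  qed
  have le: "m x \<le> P x" for x
    using m(2)[of x] sh_le[OF P, of z x] unfolding P'_def by simp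
  have "m (- z) \<le> P (- z + rs 1 z) - 1 * P z"
    using m(2)[of "-z"] sh_le_pt[OF P, of 1 z "-z"] unfolding P'_def by simp
  then have "P z \<le> m z" using neg[of z] sublin_0[OF P] by (simp add: rone)
  then show ?thesis using add hom le by blast
qed

end


lemma cvs_rvs: "complex_vs smul \<Longrightarrow> rvs (\<lambda>r x. smul (complex_of_real r) x)"
  unfolding rvs_def complex_vs_def by (simp add: of_real_add of_real_mult)

lemma cvs_zero: "complex_vs smul \<Longrightarrow> smul 0 x = 0"
proof -
  assume c: "complex_vs smul"
  have "smul (0+0) x = smul 0 x + smul 0 x" using c unfolding complex_vs_def by blast
  then show ?thesis by simp
qed

lemma cvs_zero2: "complex_vs smul \<Longrightarrow> smul c 0 = 0"
proof -
  assume c: "complex_vs smul"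
  have "smul c (0+0) = smul c 0 + smul c 0" using c unfolding complex_vs_def by blast
  then show ?thesis by simp
qed

lemma cvs_neg: "complex_vs smul \<Longrightarrow> smul (-1) x = - x"
proof -
  assume c: "complex_vs smul"
  have "smul (1 + -1) x = smul 1 x + smul (-1) x" using c unfolding complex_vs_def by blast
  moreover have "smul 1 x = x" using c unfolding complex_vs_def by blast
  ultimately have "x + smul (-1) x = 0" using cvs_zero[OF c] by simp
  then show ?thesis by (simp add: eq_neg_iff_add_eq_0 add.commute)
qed

lemma tvs_cvs: "hausdorff_lctvs smul \<Longrightarrow> complex_vs smul"
  unfolding hausdorff_lctvs_def by (elim conjE)

lemma tvs_cont_smul:
  assumes X: "hausdorff_lctvs smul" shows "continuous_on UNIV (\<lambda>x. smul c x)"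
proof -
  have s: "continuous_on UNIV (\<lambda>p::complex \<times> _. smul (fst p) (snd p))"
    using X unfolding hausdorff_lctvs_def by (elim conjE)
  have "continuous_on UNIV (\<lambda>x. (c, x))" by (rule continuous_on_Pair[OF continuous_on_const continuous_on_id])
  from continuous_on_compose2[OF s this] show ?thesis by simp
qed

lemma tvs_cont_scal:
  assumes X: "hausdorff_lctvs smul" shows "continuous_on UNIV (\<lambda>r::real. smul (complex_of_real r) x)"
proof -
  have s: "continuous_on UNIV (\<lambda>p::complex \<times> _. smul (fst p) (snd p))"
    using X unfolding hausdorff_lctvs_def by (elim conjE)
  have "continuous_on UNIV (\<lambda>r::real. (complex_of_real r, x))"
    by (rule continuous_on_Pair[OF continuous_on_of_real[OF continuous_on_id] continuous_on_const])
  from continuous_on_compose2[OF s this] show ?thesis by simp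
qed

lemma tvs_cont_add:
  fixes smul :: "complex \<Rightarrow> 'x::{t2_space,ab_group_add} \<Rightarrow> 'x"
  assumes X: "hausdorff_lctvs smul" shows "continuous_on UNIV (\<lambda>x::'x::{t2_space,ab_group_add}. x + c)"
proof -
  have s: "continuous_on UNIV (\<lambda>p::'x \<times> 'x. fst p + snd p)"
    using X unfolding hausdorff_lctvs_def by (elim conjE)
  have "continuous_on UNIV (\<lambda>x::'x. (x, c))" by (rule continuous_on_Pair[OF continuous_on_id continuous_on_const])
  from continuous_on_compose2[OF s this] show ?thesis by simp
qed

lemma gauge:
  fixes smul :: "complex \<Rightarrow> 'x::{t2_space,ab_group_add} \<Rightarrow> 'x"
  assumes X: "hausdorff_lctvs smul" and C: "open C" "0 \<in> C" "convex_wrt smul C" and z: "z \<notin> C"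
  defines "rs \<equiv> \<lambda>r x. smul (complex_of_real r) x"
  defines "mu \<equiv> \<lambda>x. Inf {t. t > 0 \<and> rs (1/t) x \<in> C}"
  shows "rvs.sublin rs mu" "\<And>x. x \<in> C \<Longrightarrow> mu x \<le> 1" "1 \<le> mu z"
proof -
  have cv: "complex_vs smul" by (rule tvs_cvs[OF X])
  interpret R: rvs rs unfolding rs_def by (rule cvs_rvs[OF cv])
  have conv: "rs t x + rs (1 - t) y \<in> C" if "x \<in> C" "y \<in> C" "0 \<le> t" "t \<le> 1" for x y t
    using C(3) that unfolding convex_wrt_def rs_def by blast
  have absorb: "\<exists>t. t > 0 \<and> rs (1/t) x \<in> C" for x
  proof -
    have "open ((\<lambda>r::real. rs r x) -` C)"
      unfolding rs_def by (rule open_vimage[OF C(1) tvs_cont_scal[OF X]])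
    moreover have "(0::real) \<in> (\<lambda>r::real. rs r x) -` C" using C(2) by simp
    ultimately obtain d where d: "d > 0" "\<And>r. dist r 0 < d \<Longrightarrow> rs r x \<in> C"
      unfolding open_dist by blast
    show ?thesis
      by (rule exI[of _ "2/d"]) (use d in auto)
  qed
  let ?S = "\<lambda>x. {t. t > 0 \<and> rs (1/t) x \<in> C}"
  have ne: "?S x \<noteq> {}" for x using absorb[of x] by auto
  have bdd: "bdd_below (?S x)" for x unfolding bdd_below_def by (rule exI[of _ 0]) auto
  have low: "mu x \<le> t" if "t > 0" "rs (1/t) x \<in> C" for x t
    unfolding mu_def by (rule cInf_lower) (use that bdd in auto)
  have geI: "c \<le> mu x" if "\<And>t. t > 0 \<Longrightarrow> rs (1/t) x \<in> C \<Longrightarrow> c \<le> t" for c x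
    unfolding mu_def by (rule cInf_greatest) (use that ne in auto)
  show "R.sublin mu"
  proof (rule R.sublinI)
    fix x y
    have key: "mu (x + y) \<le> s + t" if s: "s > 0" "rs (1/s) x \<in> C" and t: "t > 0" "rs (1/t) y \<in> C" for s t
    proof -
      have "rs (s/(s+t)) (rs (1/s) x) + rs (1 - s/(s+t)) (rs (1/t) y) \<in> C"
        using conv[OF s(2) t(2), of "s/(s+t)"] s t by simp
      also have "rs (s/(s+t)) (rs (1/s) x) + rs (1 - s/(s+t)) (rs (1/t) y) = rs (1/(s+t)) (x + y)"
      proof -
        have "1 - s/(s+t) = t/(s+t)" using s t by (simp add: field_simps)
        then show ?thesis using s t by (simp add: R.rassoc R.radd)
      qed
      finally show ?thesis using low[of "s+t" "x+y"] s t by simp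
    qed
    have "mu (x + y) - t \<le> mu x" if "t > 0" "rs (1/t) y \<in> C" for t
    proof (rule geI)
      fix s :: real assume "s > 0" "rs (1/s) x \<in> C"
      then show "mu (x + y) - t \<le> s" using key[of s t] that by simp
    qed
    then have "mu (x + y) - mu x \<le> mu y" by (intro geI) (smt (verit))
    then show "mu (x + y) \<le> mu x + mu y" by simp
  next
    fix r :: real and x assume r: "r > 0"
    have "mu (rs r x) / r \<le> mu x"
    proof (rule geI)
      fix t :: real assume t: "t > 0" "rs (1/t) x \<in> C"
      have "rs (1/(r*t)) (rs r x) = rs (1/t) x" using r by (simp add: R.rassoc)
      then have "mu (rs r x) \<le> r * t" using low[of "r*t" "rs r x"] r t by simp
      then show "mu (rs r x) / r \<le> t" using r by (simp add: field_simps)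
    qed
    then show "mu (rs r x) \<le> r * mu x" using r by (simp add: field_simps)
  qed
  show "mu x \<le> 1" if "x \<in> C" for x using low[of 1 x] that by (simp add: R.rone)
  show "1 \<le> mu z"
  proof (rule ccontr)
    assume "\<not> 1 \<le> mu z"
    then have "mu z < 1" by simp
    then obtain t where t: "t \<in> ?S z" "t < 1"
      using cInf_lessD[OF ne[of z]] unfolding mu_def by blast
    have "rs t (rs (1/t) z) + rs (1 - t) 0 \<in> C" using conv[of "rs (1/t) z" 0 t] t C(2) by simp
    then have "z \<in> C" using t by (simp add: R.rassoc R.rone)
    then show False using z by simp
  qed
qed

lemma separate:
  fixes smul :: "complex \<Rightarrow> 'x::{t2_space,ab_group_add} \<Rightarrow> 'x"
  assumes X: "hausdorff_lctvs smul" and pq: "p \<noteq> q"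
  shows "\<exists>e \<in> dual_space smul. Re (e p) + 1 \<le> Re (e q)"
proof -
  have cv: "complex_vs smul" by (rule tvs_cvs[OF X])
  define rs where "rs = (\<lambda>r x. smul (complex_of_real r) x)"
  interpret R: rvs rs unfolding rs_def by (rule cvs_rvs[OF cv])
  define z where "z = q - p"
  have z0: "(0::'x) \<noteq> z" using pq unfolding z_def by simp
  obtain U V where UV: "open U" "open V" "(0::'x) \<in> U" "z \<in> V" "U \<inter> V = {}"
    using hausdorff[OF z0] by blast
  have lc: "\<forall>U. open U \<and> (0::'x) \<in> U \<longrightarrow> (\<exists>C. open C \<and> 0 \<in> C \<and> C \<subseteq> U \<and> convex_wrt smul C)"
    using X unfolding hausdorff_lctvs_def by (elim conjE)
  obtain C where C: "open C" "0 \<in> C" "C \<subseteq> U" "convex_wrt smul C"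
    using lc[rule_format, of U] UV(1,3) by auto
  have zC: "z \<notin> C" using C(3) UV by blast
  define mu where "mu = (\<lambda>x. Inf {t. t > 0 \<and> rs (1/t) x \<in> C})"
  have g: "R.sublin mu" "\<And>x. x \<in> C \<Longrightarrow> mu x \<le> 1" "1 \<le> mu z"
    unfolding mu_def rs_def using gauge[OF X C(1,2,4) zC] by auto
  obtain l where ladd: "\<And>x y. l (x + y) = l x + l y" and lhom: "\<And>r x. l (rs r x) = r * l x"
    and lmu: "\<And>x. l x \<le> mu x" and lz: "mu z \<le> l z"
    using R.hahn_banach[OF g(1), of z] by blast
  have lz1: "1 \<le> l z" using lz g(3) by simp
  have l0: "l 0 = 0" using lhom[of 0 0] by simp
  have lneg: "l (- x) = - l x" for x using ladd[of x "-x"] l0 by simp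
  have ldiff: "l (x - y) = l x - l y" for x y using ladd[of x "-y"] lneg[of y] by simp
  have lbound: "\<bar>l x\<bar> \<le> 1" if "x \<in> C" "- x \<in> C" for x
    using lmu[of x] lmu[of "-x"] g(2)[OF that(1)] g(2)[OF that(2)] lneg[of x] by simp
  have negc: "continuous_on UNIV (\<lambda>x::'x. - x)"
    using tvs_cont_smul[OF X, of "-1"] cvs_neg[OF cv] by simp
  define W where "W = C \<inter> (\<lambda>x. - x) -` C"
  have Wo: "open W" unfolding W_def using C(1) open_vimage[OF C(1) negc] by blast
  have W0: "0 \<in> W" unfolding W_def using C(2) by simp
  have lcont: "isCont l x0" for x0
    unfolding isCont_def tendsto_iff eventually_at_topological
  proof (intro allI impI)
    fix e :: real assume e: "e > 0"
    define g where "g = (\<lambda>x. rs (2/e) (x + (- x0)))"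
    have gc: "continuous_on UNIV g" unfolding g_def rs_def
      by (rule continuous_on_compose2[OF tvs_cont_smul[OF X] tvs_cont_add[OF X]]) simp
    have "open (g -` W)" by (rule open_vimage[OF Wo gc])
    moreover have "x0 \<in> g -` W" unfolding g_def using W0 by simp
    moreover have "dist (l y) (l x0) < e" if "y \<in> g -` W" for y
    proof -
      have "\<bar>l (g y)\<bar> \<le> 1" using that lbound unfolding W_def by auto
      moreover have "l (g y) = (2/e) * (l y - l x0)" unfolding g_def
        by (simp add: lhom ldiff)
      ultimately have "\<bar>2 * l y - 2 * l x0\<bar> \<le> e" using e by (simp add: field_simps)
      then have "\<bar>l y - l x0\<bar> \<le> e/2" by arith
      then show ?thesis using e by (simp add: dist_real_def)
    qed
    ultimately show "\<exists>S. open S \<and> x0 \<in> S \<and> (\<forall>x\<in>S. x \<noteq> x0 \<longrightarrow> x \<in> UNIV \<longrightarrow> dist (l x) (l x0) < e)"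
      by blast
  qed
  have lc_on: "continuous_on UNIV l" using lcont by (simp add: continuous_at_imp_continuous_on)
  define e where "e = (\<lambda>x. complex_of_real (l x) - \<i> * complex_of_real (l (smul \<i> x)))"
  have sm_add: "smul c (x + y) = smul c x + smul c y" for c x y
    using cv unfolding complex_vs_def by blast
  have sm_addl: "smul (a + b) x = smul a x + smul b x" for a b x
    using cv unfolding complex_vs_def by blast
  have sm_assoc: "smul a (smul b x) = smul (a * b) x" for a b x
    using cv unfolding complex_vs_def by blast
  have Lsmul: "l (smul c x) = Re c * l x + Im c * l (smul \<i> x)" for c x
  proof -
    have "smul c x = smul (complex_of_real (Re c) + complex_of_real (Im c) * \<i>) x"
      by (metis complex_eq mult.commute)
    also have "\<dots> = rs (Re c) x + rs (Im c) (smul \<i> x)"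
      unfolding rs_def sm_addl sm_assoc by simp
    finally show ?thesis by (simp add: ladd lhom)
  qed
  have edual: "e \<in> dual_space smul"
    unfolding dual_space_def
  proof (intro CollectI conjI allI)
    fix x y show "e (x + y) = e x + e y" unfolding e_def by (simp add: sm_add ladd algebra_simps)
  next
    fix c x
    have "e (smul c x) = complex_of_real (Re c * l x + Im c * l (smul \<i> x)) -
        \<i> * complex_of_real (Re (\<i> * c) * l x + Im (\<i> * c) * l (smul \<i> x))"
      unfolding e_def sm_assoc using Lsmul[of c x] Lsmul[of "\<i> * c" x] by simp
    also have "\<dots> = c * e x" unfolding e_def by (simp add: complex_eq_iff)
    finally show "e (smul c x) = c * e x" .
  next
    have c1: "continuous_on UNIV (\<lambda>x. l (smul \<i> x))"
      by (rule continuous_on_compose2[OF lc_on tvs_cont_smul[OF X]]) simp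
    show "continuous_on UNIV e" unfolding e_def
      by (intro continuous_on_diff continuous_on_mult continuous_on_const continuous_on_of_real c1 lc_on)
  qed
  have "Re (e x) = l x" for x unfolding e_def by simp
  moreover have "l q = l p + l z" unfolding z_def by (metis ladd add.commute diff_add_cancel)
  ultimately have "Re (e p) + 1 \<le> Re (e q)" using lz1 by simp
  then show ?thesis using edual by blast
qed

lemma finite_inter_in:
  assumes zf: "z_filter T \<F>"
  shows "finite G \<Longrightarrow> G \<noteq> {} \<Longrightarrow> G \<subseteq> \<F> \<Longrightarrow> \<Inter>G \<in> \<F>"
proof (induction G rule: finite_ne_induct)
  case (singleton x) then show ?case by simp
next
  case (insert x G)
  then have "x \<in> \<F>" "\<Inter>G \<in> \<F>" by auto
  moreover have "\<forall>F\<in>\<F>. \<forall>G\<in>\<F>. F \<inter> G \<in> \<F>" using zf unfolding z_filter_def by (elim conjE)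
  ultimately show ?case by simp
qed

lemma core:
  fixes smul :: "complex \<Rightarrow> 'x::{t2_space,ab_group_add} \<Rightarrow> 'x" and h :: "'a \<Rightarrow> 'x"
  assumes X: "hausdorff_lctvs smul"
    and K: "compact (closure (h ` S0))"
    and sub: "\<And>F. F \<in> \<F> \<Longrightarrow> F \<inter> supp T v \<subseteq> S0"
    and bs: "beta_separates T A v smul h"
    and af: "antisymmetric_zf T A v \<F>"
  shows "\<exists>p. (\<Inter>F\<in>\<F>. closure (h ` (F \<inter> supp T v))) = {p}"
proof -
  have zf: "z_filter T \<F>" and meets: "\<And>F. F \<in> \<F> \<Longrightarrow> F \<inter> supp T v \<noteq> {}"
    using af unfolding antisymmetric_zf_def by blast+
  have ne: "\<F> \<noteq> {}" using zf unfolding z_filter_def by blast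
  define I where "I = (\<Inter>F\<in>\<F>. closure (h ` (F \<inter> supp T v)))"
  have "closure (h ` S0) \<inter> I \<noteq> {}"
    unfolding I_def
  proof (rule compact_imp_fip_image[OF K])
    fix I' assume I': "finite I'" "I' \<subseteq> \<F>"
    show "closure (h ` S0) \<inter> (\<Inter>i\<in>I'. closure (h ` (i \<inter> supp T v))) \<noteq> {}"
    proof (cases "I' = {}")
      case True
      obtain F0 where F0: "F0 \<in> \<F>" using ne by blast
      then obtain x where "x \<in> F0 \<inter> supp T v" using meets by blast
      then have "h x \<in> closure (h ` S0)" using sub[OF F0] by (meson closure_subset image_eqI subsetD)
      then show ?thesis using True by auto
    next
      case False
      have G: "\<Inter>I' \<in> \<F>" by (rule finite_inter_in[OF zf I'(1) False I'(2)])
      then obtain x where x: "x \<in> \<Inter>I' \<inter> supp T v" using meets by blast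
      then have "h x \<in> closure (h ` S0)" using sub[OF G] by (meson closure_subset image_eqI subsetD)
      moreover have "h x \<in> closure (h ` (i \<inter> supp T v))" if "i \<in> I'" for i
        using x that closure_subset by fastforce
      ultimately show ?thesis by blast
    qed
  qed simp
  then obtain p where p: "p \<in> I" by blast
  have nosep: False if pI: "p \<in> I" and qI: "q \<in> I" and e: "e \<in> dual_space smul"
    and pq: "Re (e p) + 1 \<le> Re (e q)" for p q e
  proof -
    have ec: "continuous_on UNIV e" using e unfolding dual_space_def by blast
    have rc: "continuous_on UNIV (\<lambda>y. Re (e y))" by (rule continuous_on_Re[OF ec])
    have lt: "Re (e p) + 1/3 < Re (e p) + 2/3" by simp
    have "\<exists>F\<in>\<F>. F \<inter> {x \<in> supp T v. Re (e (h x)) \<le> Re (e p) + 1/3} = {} \<or>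
            F \<inter> {x \<in> supp T v. Re (e (h x)) \<ge> Re (e p) + 2/3} = {}"
      using bs[unfolded beta_separates_def, rule_format, OF conjI[OF af conjI[OF e lt]]] .
    then obtain F where F: "F \<in> \<F>" and
      dis: "F \<inter> {x \<in> supp T v. Re (e (h x)) \<le> Re (e p) + 1/3} = {} \<or>
            F \<inter> {x \<in> supp T v. Re (e (h x)) \<ge> Re (e p) + 2/3} = {}"
      by blast
    have pF: "p \<in> closure (h ` (F \<inter> supp T v))" using pI F unfolding I_def by blast
    have qF: "q \<in> closure (h ` (F \<inter> supp T v))" using qI F unfolding I_def by blast
    show False
      using dis
    proof
      assume d: "F \<inter> {x \<in> supp T v. Re (e (h x)) \<le> Re (e p) + 1/3} = {}"
      have "h ` (F \<inter> supp T v) \<subseteq> {y. Re (e p) + 1/3 \<le> Re (e y)}" using d by force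
      moreover have "closed {y. Re (e p) + 1/3 \<le> Re (e y)}"
        by (rule closed_Collect_le[OF continuous_on_const rc])
      ultimately have "closure (h ` (F \<inter> supp T v)) \<subseteq> {y. Re (e p) + 1/3 \<le> Re (e y)}"
        by (rule closure_minimal)
      then show False using pF by auto
    next
      assume d: "F \<inter> {x \<in> supp T v. Re (e (h x)) \<ge> Re (e p) + 2/3} = {}"
      have "h ` (F \<inter> supp T v) \<subseteq> {y. Re (e y) \<le> Re (e p) + 2/3}" using d by force
      moreover have "closed {y. Re (e y) \<le> Re (e p) + 2/3}"
        by (rule closed_Collect_le[OF rc continuous_on_const])
      ultimately have "closure (h ` (F \<inter> supp T v)) \<subseteq> {y. Re (e y) \<le> Re (e p) + 2/3}"
        by (rule closure_minimal)
      then show False using qF pq by auto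
    qed
  qed
  have "q = p" if "q \<in> I" for q
  proof (rule ccontr)
    assume "q \<noteq> p"
    then obtain e where "e \<in> dual_space smul" "Re (e p) + 1 \<le> Re (e q)"
      using separate[OF X, of p q] by auto
    then show False using nosep[OF p that] by blast
  qed
  then have "I = {p}" using p by blast
  then show ?thesis unfolding I_def by blast
qed

theorem lemma3p5:
  fixes T :: "'a topology" and smul :: "complex \<Rightarrow> 'x::{t2_space,ab_group_add} \<Rightarrow> 'x"
    and A :: "('a \<Rightarrow> complex) set" and f :: "'a \<Rightarrow> 'x" and v :: "'a \<Rightarrow> real"
  assumes X: "hausdorff_lctvs smul"
    and A: "\<forall>\<phi>\<in>A. continuous_map T euclidean \<phi>"
    and v: "\<forall>x\<in>topspace T. v x \<ge> 0"
  shows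
    "(compact (closure ((\<lambda>x. smul (complex_of_real (v x)) (f x)) ` topspace T)) \<and>
      continuous_map (subtopology T (supp T v)) euclidean (\<lambda>x. smul (complex_of_real (v x)) (f x)) \<and>
      beta_separates T A v smul (\<lambda>x. smul (complex_of_real (v x)) (f x))
      \<longrightarrow> (\<forall>\<F>. antisymmetric_zf T A v \<F> \<longrightarrow>
            (\<exists>p. (\<Inter>F\<in>\<F>. closure ((\<lambda>x. smul (complex_of_real (v x)) (f x)) ` (F \<inter> supp T v))) = {p})))
   \<and>
     (compact (closure (f ` supp T v)) \<and>
      continuous_map (subtopology T (supp T v)) euclidean f \<and>
      beta_separates T A v smul f
      \<longrightarrow> (\<forall>\<F>. antisymmetric_zf T A v \<F> \<longrightarrow>
            (\<exists>p. (\<Inter>F\<in>\<F>. closure (f ` (F \<inter> supp T v))) = {p})))"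
proof (intro conjI impI allI)
  have st: "supp T v \<subseteq> topspace T" unfolding supp_def by (rule closure_of_subset_topspace)
  fix \<F> assume H: "compact (closure ((\<lambda>x. smul (complex_of_real (v x)) (f x)) ` topspace T)) \<and>
      continuous_map (subtopology T (supp T v)) euclidean (\<lambda>x. smul (complex_of_real (v x)) (f x)) \<and>
      beta_separates T A v smul (\<lambda>x. smul (complex_of_real (v x)) (f x))"
    and af: "antisymmetric_zf T A v \<F>"
  show "\<exists>p. (\<Inter>F\<in>\<F>. closure ((\<lambda>x. smul (complex_of_real (v x)) (f x)) ` (F \<inter> supp T v))) = {p}"
    by (rule core[OF X _ _ _ af, of _ "topspace T"]) (use H st in auto)
next
  fix \<F> assume H: "compact (closure (f ` supp T v)) \<and>
      continuous_map (subtopology T (supp T v)) euclidean f \<and>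
      beta_separates T A v smul f"
    and af: "antisymmetric_zf T A v \<F>"
  show "\<exists>p. (\<Inter>F\<in>\<F>. closure (f ` (F \<inter> supp T v))) = {p}"
    by (rule core[OF X _ _ _ af, of _ "supp T v"]) (use H in auto)
qed

end
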